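(* Let $T$ be a string of length $n$ and $1\le i\le j<n$, and suppose $\#\mathit{occ}_{T[i..j+1]}(\mathit{sqs}_{i,j+1})=2$. Then there are integers $p_l,p_s,q$ with $i\le p_l\le p_s\le q<j+1$ such that $T[p_s..q]=\mathit{sqs}_{i,j+1}$ and $T[p_l..q]=\mathit{lrs}_{i,j+1}$. Moreover, for these integers: (a) if there is no interval $[s',q+1]\in\mathsf{MUS}(T[i..j])$ (no MUS of $T[i..j]$ ending at $q+1$), then $[p_s,q+1]\in\mathsf{MUS}(T[i..j+1])$; (b) if there is no interval $[p_l-1,t']\in\mathsf{MUS}(T[i..j])$ (no MUS of $T[i..j]$ starting at $p_l-1$) and $p_l\ge i+1$, then $[p_l-1,q]\in\mathsf{MUS}(T[i..j+1])$.
   Context: $T[a..b]$ denotes the substring of $T$ from position $a$ to $b$. For strings $S,w$, $\#\mathit{occ}_S(w)$ is the number of positions at which $w$ occurs in $S$, with $\#\mathit{occ}_S(\varepsilon)=|S|+1$. A substring $w$ of $S$ is unique in $S$ if $\#\mathit{occ}_S(w)=1$ and repeating if $\#\mathit{occ}_S(w)\ge 2$. For $1\le i\le j\le n$, $\mathsf{MUS}(T[i..j])$ is the set of intervals $[s,t]$ (positions in $T$) with $i\le s\le t\le j$ such that $T[s..t]$ is unique in $T[i..j]$ and every proper substring of $T[s..t]$ (including the empty string) is repeating in $T[i..j]$. $\mathit{lrs}_{i,j}$ is the longest suffix of $T[i..j]$ occurring at least twice in $T[i..j]$ (possibly empty); $\mathit{sqs}_{i,j}$ is the shortest suffix of $T[i..j]$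 occurring at most twice in $T[i..j]$. *)

theory Defs
  imports Main "HOL-Library.Sublist"
begin

text \<open>Strings are lists; positions are 1-based. substr T a b is T[a..b]
  (empty if b < a).\<close>
definition substr :: "'a list \<Rightarrow> nat \<Rightarrow> nat \<Rightarrow> 'a list" where
  "substr T a b = map (\<lambda>k. T ! (k - 1)) [a..<b+1]"

text \<open>Number of occurrences of w in S (occ S [] = |S|+1).\<close>
definition occ :: "'a list \<Rightarrow> 'a list \<Rightarrow> nat" where
  "occ S w = card {k. k + length w \<le> length S \<and> take (length w) (drop k S) = w}"

definition unique_in :: "'a list \<Rightarrow> 'a list \<Rightarrow> bool" where
  "unique_in S w \<longleftrightarrow> occ S w = 1"

definition repeating_in :: "'a list \<Rightarrow> 'a list \<Rightarrow> bool" where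
  "repeating_in S w \<longleftrightarrow> occ S w \<ge> 2"

definition MUS :: "'a list \<Rightarrow> nat \<Rightarrow> nat \<Rightarrow> (nat \<times> nat) set" where
  "MUS T i j = {(s,t). i \<le> s \<and> s \<le> t \<and> t \<le> j
      \<and> unique_in (substr T i j) (substr T s t)
      \<and> (\<forall>w. sublist w (substr T s t) \<and> length w < length (substr T s t)
             \<longrightarrow> repeating_in (substr T i j) w)}"

definition suf :: "'a list \<Rightarrow> nat \<Rightarrow> 'a list" where
  "suf S l = drop (length S - l) S"

definition lrs_str :: "'a list \<Rightarrow> 'a list" where
  "lrs_str S = suf S (GREATEST l. l \<le> length S \<and> occ S (suf S l) \<ge> 2)"

definition sqs_str :: "'a list \<Rightarrow> 'a list" where
  "sqs_str S = suf S (LEAST l. l \<le> length S \<and> occ S (suf S l) \<le> 2)"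

definition lrs :: "'a list \<Rightarrow> nat \<Rightarrow> nat \<Rightarrow> 'a list" where
  "lrs T i j = lrs_str (substr T i j)"

definition sqs :: "'a list \<Rightarrow> nat \<Rightarrow> nat \<Rightarrow> 'a list" where
  "sqs T i j = sqs_str (substr T i j)"

end

theory Submission
  imports Defs
begin

definition occs :: "'a list \<Rightarrow> 'a list \<Rightarrow> nat set" where
  "occs S w = {k. k + length w \<le> length S \<and> take (length w) (drop k S) = w}"

definition fac :: "'a list \<Rightarrow> nat \<Rightarrow> nat \<Rightarrow> 'a list" where
  "fac U a l = take l (drop a U)"

lemma occ_occs: "occ S w = card (occs S w)"
  unfolding occ_def occs_def by simp

lemma finite_occs[simp]: "finite (occs S w)"
  by (rule finite_subset[of _ "{..length S}"]) (auto simp: occs_def)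

lemma occs_shift: assumes "k \<in> occs U (p @ w @ s)" shows "k + length p \<in> occs U w"
proof -
  have l: "k + length (p@w@s) \<le> length U" and e: "take (length (p@w@s)) (drop k U) = p@w@s"
    using assms by (auto simp: occs_def)
  have "drop k U = p@w@s@drop (length (p@w@s)) (drop k U)"
    by (metis append_assoc append_take_drop_id e)
  hence "drop (k + length p) U = w@s@drop (length (p@w@s)) (drop k U)"
    by (metis add.commute append_eq_conv_conj drop_drop)
  thus ?thesis using l by (auto simp: occs_def)
qed

lemma occs_prefix: "k \<in> occs U (w @ s) \<Longrightarrow> k \<in> occs U w"
  using occs_shift[of k U "[]" w s] by simp

lemma occs_suffix: "k \<in> occs U (p @ w) \<Longrightarrow> k + length p \<in> occs U w"
  using occs_shift[of k U p w "[]"] by simp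

lemma occ_sublist: assumes "sublist w v" shows "occ S v \<le> occ S w"
proof -
  obtain p s where v: "v = p @ w @ s" using assms by (auto simp: sublist_def)
  have "inj_on (\<lambda>k. k + length p) (occs S v)" by (auto simp: inj_on_def)
  moreover have "(\<lambda>k. k + length p) ` occs S v \<subseteq> occs S w"
    using occs_shift v by blast
  ultimately show ?thesis unfolding occ_occs by (meson card_inj_on_le finite_occs)
qed

lemma occs_fac: "a + l \<le> length U \<Longrightarrow> a \<in> occs U (fac U a l)"
  by (auto simp: occs_def fac_def min_def)

lemma length_fac[simp]: "a + l \<le> length U \<Longrightarrow> length (fac U a l) = l"
  by (auto simp: fac_def)

lemma occs_take_sub: "occs (take M U) w \<subseteq> occs U w"
  by (auto simp: occs_def min_def take_drop)

lemma occ_take_le: "occ (take M U) w \<le> occ U w"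
  unfolding occ_occs by (rule card_mono[OF finite_occs occs_take_sub])

lemma occs_take_in: "k \<in> occs U v \<Longrightarrow> L \<le> length v \<Longrightarrow> k + L \<le> M \<Longrightarrow> M \<le> length U
   \<Longrightarrow> k \<in> occs (take M U) (take L v)"
proof -
  assume a: "k \<in> occs U v" "L \<le> length v" "k + L \<le> M" "M \<le> length U"
  hence v: "take (length v) (drop k U) = v" by (auto simp: occs_def)
  have "take L v = take L (drop k U)" using a(2) by (subst v[symmetric]) (simp add: min_def)
  also have "\<dots> = take L (drop k (take M U))" using a(3) by (simp add: take_drop)
  finally show ?thesis using a by (auto simp: occs_def min_def)
qed

lemma occs_last: "M + 1 = length U \<Longrightarrow> occs U w \<subseteq> insert (length U - length w) (occs (take M U) w)"
proof
  fix x assume M: "M + 1 = length U" and x: "x \<in> occs U w"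
  show "x \<in> insert (length U - length w) (occs (take M U) w)"
  proof (cases "x + length w \<le> M")
    case True
    have "take (length w) (drop x (take M U)) = take (length w) (drop x U)"
      using True by (simp add: take_drop)
    thus ?thesis using x True M by (auto simp: occs_def)
  next
    case False thus ?thesis using x M by (auto simp: occs_def)
  qed
qed

lemma occ_le_take: assumes "M + 1 = length U" shows "occ U w \<le> occ (take M U) w + 1"
proof -
  have "card (occs U w) \<le> card (insert (length U - length w) (occs (take M U) w))"
    by (rule card_mono) (use occs_last[OF assms] in auto)
  also have "\<dots> \<le> card (occs (take M U) w) + 1" by (simp add: card_insert_le_m1 card_insert_if)
  finally show ?thesis by (simp add: occ_occs)
qed

lemma occ_nil: "occ U [] = length U + 1"
proof -
  have "occs U [] = {..length U}" by (auto simp: occs_def)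
  thus ?thesis by (simp add: occ_occs)
qed

lemma occ_self: "occ U U = 1"
proof -
  have "occs U U = {0}" by (auto simp: occs_def)
  thus ?thesis by (simp add: occ_occs)
qed

lemma card_ge2: "x \<in> A \<Longrightarrow> y \<in> A \<Longrightarrow> x \<noteq> y \<Longrightarrow> finite A \<Longrightarrow> 2 \<le> card A"
  by (metis card_2_iff card_mono empty_subsetI insert_subset)

lemma card_ge1: "x \<in> A \<Longrightarrow> finite A \<Longrightarrow> 1 \<le> card A"
  by (metis One_nat_def Suc_leI card_gt_0_iff empty_iff)

lemma proper_sublist: assumes "sublist w X" "length w < length X"
  shows "sublist w (butlast X) \<or> sublist w (tl X)"
proof -
  obtain p s where X: "X = p @ w @ s" using assms by (auto simp: sublist_def)
  show ?thesis
  proof (cases "s = []")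
    case True
    then obtain c p' where "p = c # p'" using assms X by (cases p) auto
    hence "tl X = p' @ w @ []" using X True by simp
    thus ?thesis unfolding sublist_def by blast
  next
    case False
    hence "butlast X = p @ w @ butlast s" using X by (simp add: butlast_append)
    thus ?thesis by (auto simp: sublist_def)
  qed
qed

lemma proper_rep: "2 \<le> occ V (butlast X) \<Longrightarrow> 2 \<le> occ V (tl X) \<Longrightarrow>
   \<forall>w. sublist w X \<and> length w < length X \<longrightarrow> repeating_in V w"
  unfolding repeating_in_def
  by (meson le_trans occ_sublist proper_sublist)

lemma length_substr[simp]: "length (substr T a b) = b + 1 - a"
  by (simp add: substr_def Suc_diff_le)

lemma substr_fac: "1 \<le> i \<Longrightarrow> i \<le> a \<Longrightarrow> b \<le> J \<Longrightarrow> J \<le> length T \<Longrightarrow>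
   substr T a b = fac (substr T i J) (a - i) (b + 1 - a)"
  unfolding fac_def
proof (rule nth_equalityI)
  assume a: "1 \<le> i" "i \<le> a" "b \<le> J" "J \<le> length T"
  show "length (substr T a b) = length (take (b + 1 - a) (drop (a - i) (substr T i J)))"
    using a by (simp add: min_def) arith
  fix k assume "k < length (substr T a b)"
  hence k: "k < b + 1 - a" by simp
  have "substr T a b ! k = T ! (a + k - 1)" using k by (simp add: substr_def del: upt_Suc)
  moreover have "take (b + 1 - a) (drop (a - i) (substr T i J)) ! k = substr T i J ! (a - i + k)"
    using k a by simp
  moreover have "a - i + k < J + 1 - i" using k a by linarith
  hence "substr T i J ! (a - i + k) = T ! (i + (a - i + k) - 1)"
    using k a by (simp add: substr_def del: upt_Suc)
  ultimately show "substr T a b ! k = take (b + 1 - a) (drop (a - i) (substr T i J)) ! k"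
    using a by simp
qed

lemma occs_fac_eq: "k \<in> occs U w \<Longrightarrow> fac U k (length w) = w"
  by (simp add: occs_def fac_def)

lemma occs_fac_in: "a + l \<le> length U \<Longrightarrow> fac U a l = w \<Longrightarrow> a \<in> occs U w"
  using occs_fac by blast

lemma occs_bound: "k \<in> occs U w \<Longrightarrow> k + length w \<le> length U"
  by (simp add: occs_def)

lemma fac_butlast: "a + l + 1 \<le> length U \<Longrightarrow> butlast (fac U a (l+1)) = fac U a l"
  by (simp add: fac_def butlast_take min_def)

lemma fac_tl: "tl (fac U a (l+1)) = fac U (a+1) l"
  by (simp add: fac_def tl_take drop_Suc tl_drop)

lemma fac_split_last: "a + l + 1 \<le> length U \<Longrightarrow> fac U a (l+1) = fac U a l @ [U ! (a+l)]"
  by (simp add: fac_def take_Suc_conv_app_nth)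

lemma fac_split_first: "a + l + 1 \<le> length U \<Longrightarrow> fac U a (l+1) = [U ! a] @ fac U (a+1) l"
proof -
  assume "a + l + 1 \<le> length U"
  hence "drop a U = U ! a # drop (Suc a) U" by (simp add: Cons_nth_drop_Suc)
  thus ?thesis by (simp add: fac_def)
qed

lemma fac_take: "a + l \<le> M \<Longrightarrow> fac (take M U) a l = fac U a l"
  by (simp add: fac_def take_drop)

lemma fac_take_len: "l' \<le> l \<Longrightarrow> take l' (fac U a l) = fac U a l'"
  by (simp add: fac_def min_def)

lemma fac_suf: "l \<le> length U \<Longrightarrow> fac U (length U - l) l = suf U l"
  by (simp add: fac_def suf_def)

lemma length_suf: "l \<le> length U \<Longrightarrow> length (suf U l) = l"
  by (simp add: suf_def)

lemma suf_occs: "l \<le> length U \<Longrightarrow> length U - l \<in> occs U (suf U l)"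
  by (simp add: occs_def suf_def)

lemma drop_suf: "l \<le> length U \<Longrightarrow> drop d (suf U l) = suf U (l - d)"
proof (cases "d \<le> l")
  case True
  assume "l \<le> length U"
  hence "d + (length U - l) = length U - (l - d)" using True by linarith
  thus ?thesis by (simp add: suf_def)
next
  case False
  assume "l \<le> length U"
  thus ?thesis using False by (simp add: suf_def)
qed

lemma fac_inside: assumes "k \<in> occs U w" "k \<le> s" "s \<le> k + length w"
  shows "fac U s (k + length w - s) = drop (s - k) w"
proof -
  have w: "w = take (length w) (drop k U)" using assms(1) by (simp add: occs_def)
  have "drop (s - k) w = drop (s - k) (take (length w) (drop k U))" by (subst w) simp
  also have "\<dots> = take (length w - (s - k)) (drop s U)" using assms by (simp add: drop_take)
  finally show ?thesis using assms by (simp add: fac_def add.commute)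
qed

theorem lemma6:
  fixes T :: "'a list" and i j :: nat
  assumes "1 \<le> i" and "i \<le> j" and "j < length T"
    and "occ (substr T i (j+1)) (sqs T i (j+1)) = 2"
  shows "(\<exists>pl ps q. i \<le> pl \<and> pl \<le> ps \<and> ps \<le> q \<and> q < j + 1
            \<and> substr T ps q = sqs T i (j+1) \<and> substr T pl q = lrs T i (j+1))
       \<and> (\<forall>pl ps q. i \<le> pl \<and> pl \<le> ps \<and> ps \<le> q \<and> q < j + 1
            \<and> substr T ps q = sqs T i (j+1) \<and> substr T pl q = lrs T i (j+1) \<longrightarrow>
            ((\<not> (\<exists>s'. (s', q+1) \<in> MUS T i j)) \<longrightarrow> (ps, q+1) \<in> MUS T i (j+1))
          \<and> ((\<not> (\<exists>t'. (pl - 1, t') \<in> MUS T i j)) \<and> i + 1 \<le> pl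
               \<longrightarrow> (pl - 1, q) \<in> MUS T i (j+1)))"
proof -
  define U where "U = substr T i (j+1)"
  define W where "W = substr T i j"
  define n where "n = length U"
  have nU: "n = j + 2 - i" using assms by (simp add: n_def U_def)
  have n2: "n \<ge> 2" using assms nU by linarith
  have subU: "\<And>a b. i \<le> a \<Longrightarrow> b \<le> j+1 \<Longrightarrow> substr T a b = fac U (a-i) (b+1-a)"
    unfolding U_def using assms by (intro substr_fac) auto
  have subW: "\<And>a b. i \<le> a \<Longrightarrow> b \<le> j \<Longrightarrow> substr T a b = fac W (a-i) (b+1-a)"
    unfolding W_def using assms by (intro substr_fac) auto
  have WU: "W = take (n-1) U"
    using subU[of i j] assms nU by (simp add: W_def fac_def)
  have lenW: "length W = n - 1" using WU n2 by (simp add: n_def)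
  have occW_le: "\<And>w. occ W w \<le> occ U w" using WU occ_take_le by metis
  have occU_le: "\<And>w. occ U w \<le> occ W w + 1" using WU occ_le_take n2 n_def
    by (metis Suc_diff_1 Suc_eq_plus1 le_trans less_le_trans numeral_2_eq_2 not_less_eq_eq zero_less_Suc)
  have occWnil: "occ W [] = n" using lenW n2 by (simp add: occ_nil)

  define ls where "ls = (LEAST l. l \<le> n \<and> occ U (suf U l) \<le> 2)"
  have sqs_eq: "sqs T i (j+1) = suf U ls" by (simp add: sqs_def sqs_str_def U_def ls_def n_def)
  have Pn: "n \<le> n \<and> occ U (suf U n) \<le> 2" by (simp add: suf_def n_def occ_self)
  have ls_P: "ls \<le> n \<and> occ U (suf U ls) \<le> 2" unfolding ls_def by (rule LeastI[of "\<lambda>l. l \<le> n \<and> occ U (suf U l) \<le> 2", OF Pn])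
  have ls_min: "\<And>l. l < ls \<Longrightarrow> occ U (suf U l) \<ge> 3"
  proof -
    fix l assume "l < ls"
    hence "\<not> (l \<le> n \<and> occ U (suf U l) \<le> 2)" unfolding ls_def by (rule not_less_Least)
    thus "occ U (suf U l) \<ge> 3" using \<open>l < ls\<close> ls_P by linarith
  qed
  have occ2: "occ U (suf U ls) = 2" using assms(4) sqs_eq U_def by simp
  have ls_pos: "ls \<ge> 1"
  proof (rule ccontr)
    assume "\<not> ls \<ge> 1"
    hence "suf U ls = []" by (simp add: suf_def)
    thus False using occ2 n2 by (simp add: occ_nil n_def)
  qed
  define ll where "ll = (GREATEST l. l \<le> n \<and> 2 \<le> occ U (suf U l))"
  have lrs_eq: "lrs T i (j+1) = suf U ll" by (simp add: lrs_def lrs_str_def U_def ll_def n_def)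
  have Pls: "ls \<le> n \<and> 2 \<le> occ U (suf U ls)" using ls_P occ2 by simp
  have ll_P: "ll \<le> n \<and> 2 \<le> occ U (suf U ll)" unfolding ll_def
    by (rule GreatestI_nat[of "\<lambda>l. l \<le> n \<and> 2 \<le> occ U (suf U l)" ls n]) (use Pls in auto)
  have ls_ll: "ls \<le> ll" unfolding ll_def
    by (rule Greatest_le_nat[of "\<lambda>l. l \<le> n \<and> 2 \<le> occ U (suf U l)" ls n]) (use Pls in auto)
  have ll_max: "\<And>l. ll < l \<Longrightarrow> l \<le> n \<Longrightarrow> occ U (suf U l) < 2"
  proof (rule ccontr)
    fix l assume a: "ll < l" "l \<le> n" "\<not> occ U (suf U l) < 2"
    hence "l \<le> ll" unfolding ll_def by (intro Greatest_le_nat[of _ l n]) auto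
    thus False using a by simp
  qed
  have ls_n: "ls \<le> n" using ls_P by simp
  have ll_n: "ll \<le> n" using ll_P by simp
  have len_ls: "length (suf U ls) = ls" using ls_n by (simp add: length_suf n_def)
  have len_ll: "length (suf U ll) = ll" using ll_n by (simp add: length_suf n_def)
  have split_ll: "suf U ll = take (ll-ls) (suf U ll) @ suf U ls"
    using drop_suf[of ll U "ll - ls"] ll_n ls_ll append_take_drop_id[of "ll-ls" "suf U ll"]
    by (simp add: n_def)
  have lrs_to_sqs: "\<And>k. k \<in> occs U (suf U ll) \<Longrightarrow> k + (ll-ls) \<in> occs U (suf U ls)"
  proof -
    fix k assume "k \<in> occs U (suf U ll)"
    hence "k \<in> occs U (take (ll-ls) (suf U ll) @ suf U ls)" using split_ll by simp
    from occs_suffix[OF this] show "k + (ll-ls) \<in> occs U (suf U ls)" using len_ll ls_ll by simp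
  qed
  have sqs_top: "n - ls \<in> occs U (suf U ls)" using suf_occs ls_n n_def by metis
  have ll_top: "n - ll \<in> occs U (suf U ll)" using suf_occs ll_n n_def by metis
  have two: "\<And>a. a \<in> occs U (suf U ls) \<Longrightarrow> a \<noteq> n - ls \<Longrightarrow> occs U (suf U ls) = {n-ls, a}"
  proof -
    fix a assume "a \<in> occs U (suf U ls)" "a \<noteq> n - ls"
    show "occs U (suf U ls) = {n-ls, a}"
      by (rule card_subset_eq[symmetric]) (use \<open>a \<in> _\<close> \<open>a \<noteq> _\<close> sqs_top occ2 in \<open>auto simp: occ_occs\<close>)
  qed

  have part1: "\<exists>pl ps q. i \<le> pl \<and> pl \<le> ps \<and> ps \<le> q \<and> q < j + 1
            \<and> substr T ps q = sqs T i (j+1) \<and> substr T pl q = lrs T i (j+1)"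
  proof -
    obtain a0 where a0: "a0 \<in> occs U (suf U ls)" "a0 \<noteq> n - ls"
    proof (rule ccontr)
      assume "\<not> thesis"
      hence "occs U (suf U ls) \<subseteq> {n - ls}" using that by blast
      hence "occ U (suf U ls) \<le> 1" unfolding occ_occs
        by (metis card.empty card.insert card_mono empty_iff finite.emptyI finite.insertI One_nat_def)
      thus False using occ2 by simp
    qed
    obtain b0 where b0: "b0 \<in> occs U (suf U ll)" "b0 \<noteq> n - ll"
    proof (rule ccontr)
      assume "\<not> thesis"
      hence "occs U (suf U ll) \<subseteq> {n - ll}" using that by blast
      hence "occ U (suf U ll) \<le> 1" unfolding occ_occs
        by (metis card.empty card.insert card_mono empty_iff finite.emptyI finite.insertI One_nat_def)
      thus False using ll_P by simp
    qed
    have a0b: "a0 + ls \<le> n" using occs_bound[OF a0(1)] len_ls n_def by simp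
    have b0b: "b0 + ll \<le> n" using occs_bound[OF b0(1)] len_ll n_def by simp
    have "b0 + (ll - ls) \<in> {n - ls, a0}" using lrs_to_sqs[OF b0(1)] two[OF a0] by simp
    moreover have "b0 + (ll - ls) \<noteq> n - ls" using b0(2) b0b ls_ll by linarith
    ultimately have ab: "b0 + (ll - ls) = a0" by simp
    have a0lt: "a0 + ls < n" using a0b a0(2) by linarith
    define q where "q = a0 + ls + i - 1"
    have e1: "substr T (a0+i) q = fac U a0 ls"
      using subU[of "a0+i" q] ls_pos a0lt nU unfolding q_def by simp
    have "a0 + ls - b0 = ll" using ab ls_ll by linarith
    hence e2: "substr T (b0+i) q = fac U b0 ll"
      using subU[of "b0+i" q] ls_pos a0lt nU ab ls_ll unfolding q_def by simp
    have "fac U a0 ls = suf U ls" using occs_fac_eq[OF a0(1)] len_ls by simp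
    moreover have "fac U b0 ll = suf U ll" using occs_fac_eq[OF b0(1)] len_ll by simp
    ultimately show ?thesis
      using e1 e2 sqs_eq lrs_eq ab ls_pos a0lt nU
      by (intro exI[of _ "b0+i"] exI[of _ "a0+i"] exI[of _ q]) (auto simp: q_def)
  qed
  have part2: "\<forall>pl ps q. i \<le> pl \<and> pl \<le> ps \<and> ps \<le> q \<and> q < j + 1
            \<and> substr T ps q = sqs T i (j+1) \<and> substr T pl q = lrs T i (j+1) \<longrightarrow>
            ((\<not> (\<exists>s'. (s', q+1) \<in> MUS T i j)) \<longrightarrow> (ps, q+1) \<in> MUS T i (j+1))
          \<and> ((\<not> (\<exists>t'. (pl - 1, t') \<in> MUS T i j)) \<and> i + 1 \<le> pl
               \<longrightarrow> (pl - 1, q) \<in> MUS T i (j+1))"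
  proof (intro allI impI)
    fix pl ps q
    assume H: "i \<le> pl \<and> pl \<le> ps \<and> ps \<le> q \<and> q < j + 1
            \<and> substr T ps q = sqs T i (j+1) \<and> substr T pl q = lrs T i (j+1)"
    define a where "a = ps - i"
    define b where "b = pl - i"
    define e where "e = q + 1 - i"
    have e_lt: "e + 1 \<le> n" using H nU unfolding e_def by linarith
    have Hs: "fac U a (q + 1 - ps) = suf U ls" using H subU[of ps q] sqs_eq by (simp add: a_def)
    have Hl: "fac U b (q + 1 - pl) = suf U ll" using H subU[of pl q] lrs_eq by (simp add: b_def)
    have "a + (q + 1 - ps) \<le> length U" using H nU unfolding a_def n_def[symmetric] by arith
    hence "length (fac U a (q + 1 - ps)) = q + 1 - ps" by (rule length_fac)
    hence ae: "a + ls = e" using Hs len_ls H by (simp add: a_def e_def)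
    have "b + (q + 1 - pl) \<le> length U" using H nU unfolding b_def n_def[symmetric] by arith
    hence "length (fac U b (q + 1 - pl)) = q + 1 - pl" by (rule length_fac)
    hence be: "b + ll = e" using Hl len_ll H by (simp add: b_def e_def)
    have a_occ: "a \<in> occs U (suf U ls)"
      using Hs H ae e_lt by (intro occs_fac_in) (auto simp: n_def a_def e_def)
    have b_occ: "b \<in> occs U (suf U ll)"
      using Hl H be e_lt by (intro occs_fac_in) (auto simp: n_def b_def e_def)
    have occS: "occs U (suf U ls) = {n-ls, a}" using two[OF a_occ] ae e_lt by linarith
    have occL: "\<And>k. k \<in> occs U (suf U ll) \<Longrightarrow> k = n - ll \<or> k = b"
    proof -
      fix k assume k: "k \<in> occs U (suf U ll)"
      have "k + (ll - ls) \<in> {n-ls, a}" using lrs_to_sqs[OF k] occS by simp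
      moreover have "k + ll \<le> n" using occs_bound[OF k] len_ll n_def by simp
      ultimately show "k = n - ll \<or> k = b" using ae be ls_ll by auto
    qed
    have facA: "fac U a ls = suf U ls" using occs_fac_eq[OF a_occ] len_ls by simp
    have facB: "fac U b ll = suf U ll" using occs_fac_eq[OF b_occ] len_ll by simp
    show "((\<not> (\<exists>s'. (s', q+1) \<in> MUS T i j)) \<longrightarrow> (ps, q+1) \<in> MUS T i (j+1))
          \<and> ((\<not> (\<exists>t'. (pl - 1, t') \<in> MUS T i j)) \<and> i + 1 \<le> pl
               \<longrightarrow> (pl - 1, q) \<in> MUS T i (j+1))"
    proof (intro conjI impI)
      assume noA: "\<not> (\<exists>s'. (s', q+1) \<in> MUS T i j)"
      define X where "X = fac U a (ls + 1)"
      have "q+1+1-ps = ls+1" using H ae unfolding a_def e_def by arith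
      hence X_eq: "substr T ps (q+1) = X" using subU[of ps "q+1"] H
        by (simp add: X_def a_def)
      have Xn: "a + ls + 1 \<le> length U" using ae e_lt n_def by simp
      have bX: "butlast X = suf U ls" using fac_butlast[OF Xn] facA X_def by simp
      have tX: "tl X = fac U (a+1) ls" using fac_tl X_def by simp
      have uniq: "occ U X = 1"
      proof -
        have "occs U X = {a}"
        proof
          show "{a} \<subseteq> occs U X" using occs_fac[of a "ls+1" U] Xn X_def by simp
          show "occs U X \<subseteq> {a}"
          proof
            fix k assume k: "k \<in> occs U X"
            have "k \<in> occs U (fac U a ls @ [U ! (a+ls)])" using k fac_split_last[OF Xn] X_def by simp
            hence "k \<in> occs U (suf U ls)" using occs_prefix facA by metis
            moreover have "k + (ls + 1) \<le> n" using occs_bound[OF k] Xn X_def n_def by simp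
            ultimately show "k \<in> {a}" using occS by auto
          qed
        qed
        thus ?thesis by (simp add: occ_occs)
      qed
      have tl2: "2 \<le> occ U (tl X)"
      proof (cases "e + 1 = n")
        case True
        hence "a + 1 = length U - ls" using ae n_def by simp
        hence "tl X = suf U ls" using tX fac_suf[of ls U] ls_n by (simp add: n_def)
        thus ?thesis using occ2 by simp
      next
        case False
        hence e_lt2: "e + 2 \<le> n" using e_lt by linarith
        show ?thesis
        proof (rule ccontr)
          assume nrep: "\<not> 2 \<le> occ U (tl X)"
          define P where "P s \<longleftrightarrow> a+1 \<le> s \<and> s \<le> e+1 \<and> occ W (fac W s (e+1-s)) \<le> 1" for s
          have "a + 1 + ls \<le> n - 1" using ae e_lt2 by linarith
          hence YW: "fac W (a+1) ls = fac U (a+1) ls" using fac_take[of "a+1" ls "n-1" U] WU by simp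
          have "e + 1 - (a+1) = ls" using ae by simp
          hence P1: "P (a+1)" unfolding P_def using YW ae nrep tX occW_le[of "tl X"]
            by simp
          define s where "s = Greatest P"
          have Ps: "P s" unfolding s_def by (rule GreatestI_nat[of P "a+1" "e+1"]) (use P1 in \<open>auto simp: P_def\<close>)
          have s_max: "\<And>t. P t \<Longrightarrow> t \<le> s" unfolding s_def
            by (rule Greatest_le_nat[of P _ "e+1"]) (auto simp: P_def)
          have s_ne: "s \<noteq> e + 1"
          proof
            assume "s = e + 1"
            hence "occ W [] \<le> 1" using Ps by (simp add: P_def fac_def)
            thus False using occWnil n2 by simp
          qed
          have s_le: "a + 1 \<le> s" "s \<le> e" using Ps s_ne by (auto simp: P_def)
          define Z where "Z = fac W s (e+1-s)"
          have Zlen: "s + (e - s) + 1 \<le> length W" using s_le lenW e_lt2 by linarith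
          have qj: "q + 1 \<le> j" using e_lt2 nU H unfolding e_def by arith
          have "q+1+1-(s+i) = e+1-s" using H unfolding e_def by arith
          hence Zsub: "substr T (s+i) (q+1) = Z" using subW[of "s+i" "q+1"] qj
            unfolding Z_def by simp
          have Zocc: "s \<in> occs W Z" unfolding Z_def using Zlen s_le by (intro occs_fac) simp
          have Zu: "occ W Z = 1" using Ps Zocc card_ge1[OF Zocc finite_occs]
            by (simp add: P_def Z_def occ_occs)
          have Z1: "Z = fac W s (e - s + 1)" using s_le Z_def by (simp add: Suc_diff_le)
          have bZ: "butlast Z = suf U (e - s)"
          proof -
            have "butlast Z = fac W s (e - s)" using fac_butlast[OF Zlen] Z1 by simp
            also have "\<dots> = fac U s (e - s)" using WU fac_take[of s "e-s" "n-1" U] s_le e_lt2 by simp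
            also have "\<dots> = drop (s - a) (suf U ls)"
              using fac_inside[OF a_occ, of s] s_le ae len_ls by simp
            also have "\<dots> = suf U (ls - (s - a))" using drop_suf ls_n n_def by metis
            also have "ls - (s - a) = e - s" using s_le ae by linarith
            finally show ?thesis .
          qed
          have "occ U (butlast Z) \<ge> 3" using bZ ls_min s_le ae by simp
          hence bZ2: "occ W (butlast Z) \<ge> 2" using occU_le[of "butlast Z"] by linarith
          have tZ: "tl Z = fac W (s+1) (e + 1 - (s+1))" using fac_tl Z1 by simp
          have tZ2: "occ W (tl Z) \<ge> 2"
          proof (rule ccontr)
            assume "\<not> occ W (tl Z) \<ge> 2"
            hence "P (s+1)" using tZ s_le by (simp add: P_def)
            thus False using s_max by fastforce
          qed
          have rep: "\<forall>w. sublist w (substr T (s+i) (q+1)) \<and> length w < length (substr T (s+i) (q+1))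
               \<longrightarrow> repeating_in W w" unfolding Zsub by (rule proper_rep[OF bZ2 tZ2])
          have "s + i \<le> q + 1" using s_le H unfolding e_def by arith
          hence "(s+i, q+1) \<in> MUS T i j"
            unfolding MUS_def W_def[symmetric] using Zsub Zu rep qj
            by (simp add: unique_in_def del: length_substr)
          thus False using noA by blast
        qed
      qed
      have rep: "\<forall>w. sublist w (substr T ps (q+1)) \<and> length w < length (substr T ps (q+1))
               \<longrightarrow> repeating_in U w" unfolding X_eq by (rule proper_rep) (use bX tl2 occ2 in auto)
      show "(ps, q+1) \<in> MUS T i (j+1)"
        unfolding MUS_def U_def[symmetric] using X_eq uniq rep H
        by (simp add: unique_in_def del: length_substr)
    next
      assume noB: "\<not> (\<exists>t'. (pl - 1, t') \<in> MUS T i j) \<and> i + 1 \<le> pl"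
      have b1: "b \<ge> 1" using noB unfolding b_def by linarith
      define X where "X = fac U (b-1) (ll + 1)"
      have "q+1-(pl-1) = ll+1" using H noB be unfolding b_def e_def by arith
      moreover have "pl - 1 - i = b - 1" unfolding b_def by arith
      moreover have ipl: "i \<le> pl - 1" using noB by arith
      ultimately have X_eq: "substr T (pl-1) q = X" using subU[of "pl-1" q] H
        by (simp add: X_def)
      have Xn: "b - 1 + ll + 1 \<le> length U" using be e_lt b1 n_def by simp
      have Xs: "X = [U ! (b-1)] @ suf U ll"
        using fac_split_first[OF Xn] b1 facB X_def by simp
      have tX: "tl X = suf U ll" using Xs by simp
      have bX: "butlast X = fac U (b-1) ll" using fac_butlast[OF Xn] X_def by simp
      have Xocc: "b - 1 \<in> occs U X" using occs_fac[of "b-1" "ll+1" U] Xn X_def by simp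
      have uniq: "occ U X = 1"
      proof -
        have "occs U X = {b-1}"
        proof
          show "{b-1} \<subseteq> occs U X" using Xocc by simp
          show "occs U X \<subseteq> {b-1}"
          proof
            fix k assume k: "k \<in> occs U X"
            have "k + 1 \<in> occs U (suf U ll)" using occs_suffix[of k U "[U ! (b-1)]" "suf U ll"] k Xs by simp
            hence "k + 1 = n - ll \<or> k + 1 = b" using occL by simp
            moreover have kb: "k + (ll + 1) \<le> n" using occs_bound[OF k] Xs len_ll n_def by simp
            moreover have "k + 1 \<noteq> n - ll"
            proof
              assume kk: "k + 1 = n - ll"
              hence "k = length U - (ll + 1)" using n_def by simp
              hence "X = suf U (ll + 1)" using occs_fac_eq[OF k] fac_suf[of "ll+1" U] kb n_def Xs len_ll
                by simp
              hence "2 \<le> occ U (suf U (ll+1))" unfolding occ_occs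
                using k Xocc kk be e_lt b1 by (intro card_ge2[of k _ "b-1"]) auto
              thus False using ll_max[of "ll+1"] kb by simp
            qed
            ultimately show "k \<in> {b-1}" by auto
          qed
        qed
        thus ?thesis by (simp add: occ_occs)
      qed
      have bl2: "2 \<le> occ U (butlast X)"
      proof (rule ccontr)
        assume nrep: "\<not> 2 \<le> occ U (butlast X)"
        have "b - 1 + ll \<le> n - 1" using be e_lt b1 by linarith
        hence YW: "fac W (b-1) ll = fac U (b-1) ll" using fac_take[of "b-1" ll "n-1" U] WU by simp
        define P where "P t \<longleftrightarrow> b-1 \<le> t \<and> t \<le> e-1 \<and> occ W (fac W (b-1) (t-(b-1))) \<le> 1" for t
        have "e - 1 - (b - 1) = ll" using be b1 by linarith
        hence P1: "P (e-1)" unfolding P_def using YW nrep bX occW_le[of "butlast X"] be b1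
          by simp
        define t where "t = Least P"
        have Pt: "P t" unfolding t_def by (rule LeastI[of P, OF P1])
        have t_min: "\<And>t'. t' < t \<Longrightarrow> \<not> P t'" unfolding t_def by (rule not_less_Least)
        have t_ne: "t \<noteq> b - 1"
        proof
          assume "t = b - 1"
          hence "occ W [] \<le> 1" using Pt by (simp add: P_def fac_def)
          thus False using occWnil n2 by simp
        qed
        have t_le: "b \<le> t" "t \<le> e - 1" using Pt t_ne by (auto simp: P_def)
        define Z where "Z = fac W (b-1) (t-(b-1))"
        have Zlen: "b - 1 + (t - b) + 1 \<le> length W" using t_le lenW e_lt b1 by linarith
        have tj: "t - 1 + i \<le> j" using t_le be e_lt nU H unfolding e_def by arith
        have "t - 1 + i + 1 - (pl - 1) = t - (b - 1)" using t_le b1 noB unfolding b_def by arith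
        hence Zsub: "substr T (pl-1) (t-1+i) = Z" using subW[of "pl-1" "t-1+i"] tj noB
          \<open>pl - 1 - i = b - 1\<close> unfolding Z_def by simp
        have Zocc: "b - 1 \<in> occs W Z" unfolding Z_def using Zlen t_le b1 by (intro occs_fac) simp
        have Zu: "occ W Z = 1" using Pt Zocc card_ge1[OF Zocc finite_occs]
          by (simp add: P_def Z_def occ_occs)
        have Z1: "Z = fac W (b-1) (t - b + 1)" using t_le b1 Z_def by (simp add: Suc_diff_le)
        have bZ: "butlast Z = fac W (b-1) ((t-1) - (b-1))"
          using fac_butlast[OF Zlen] Z1 t_le b1 by simp
        have bZ2: "occ W (butlast Z) \<ge> 2"
        proof (rule ccontr)
          assume "\<not> occ W (butlast Z) \<ge> 2"
          moreover have "b - 1 \<le> t - 1 \<and> t - 1 \<le> e - 1" using t_le b1 by linarith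
          ultimately have "P (t-1)" using bZ by (simp add: P_def)
          thus False using t_min[of "t-1"] t_le b1 by simp
        qed
        have tZ: "tl Z = fac W b (t - b)" using fac_tl[of W "b-1" "t-b"] Z1 b1 by simp
        have "b + (t - b) \<le> n - 1" using t_le be e_lt by linarith
        hence tZU: "tl Z = take (t - b) (suf U ll)"
          using tZ fac_take[of b "t-b" "n-1" U] WU facB fac_take_len[of "t-b" ll U b] t_le be by simp
        have o1: "b \<in> occs W (tl Z)" unfolding tZU WU
          using occs_take_in[OF b_occ, of "t-b" "n-1"] t_le be e_lt len_ll n_def by simp
        have "n - ll + (t - b) \<le> n - 1" using t_le be e_lt b1 by arith
        moreover have "t - b \<le> length (suf U ll)" using t_le be e_lt len_ll by arith
        moreover have "n - 1 \<le> length U" using n_def by arith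
        ultimately have o2: "n - ll \<in> occs W (tl Z)" unfolding tZU WU
          using occs_take_in[OF ll_top, of "t-b" "n-1"] by blast
        have tZ2: "occ W (tl Z) \<ge> 2" unfolding occ_occs
          using o1 o2 be e_lt by (intro card_ge2[of b _ "n - ll"]) auto
        have rep: "\<forall>w. sublist w (substr T (pl-1) (t-1+i)) \<and> length w < length (substr T (pl-1) (t-1+i))
             \<longrightarrow> repeating_in W w" unfolding Zsub by (rule proper_rep[OF bZ2 tZ2])
        have "pl - 1 \<le> t - 1 + i" using t_le unfolding b_def by arith
        hence "(pl-1, t-1+i) \<in> MUS T i j"
          unfolding MUS_def W_def[symmetric] using Zsub Zu rep tj ipl
          by (simp add: unique_in_def del: length_substr)
        thus False using noB by blast
      qed
      have rep: "\<forall>w. sublist w (substr T (pl-1) q) \<and> length w < length (substr T (pl-1) q)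
               \<longrightarrow> repeating_in U w" unfolding X_eq by (rule proper_rep) (use bl2 tX ll_P in auto)
      have "pl - 1 \<le> q" using H by arith
      then show "(pl - 1, q) \<in> MUS T i (j+1)"
        unfolding MUS_def U_def[symmetric] using X_eq uniq rep H ipl
        by (simp add: unique_in_def del: length_substr)
    qed
  qed
  show ?thesis using part1 part2 by blast
qed

end
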